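(* Let $k_1,k_2,k_3$ be real constants and use polar coordinates $x=r\cos\theta$, $y=r\sin\theta$ ($r>0$). For the potential $$V=\frac{k_1}{r^2}+\frac{k_2e^{\sqrt3\theta}+k_3e^{-\sqrt3\theta}}{r^3},$$ the function $$J=p_\theta^3+\frac34\Big[2k_1+\frac3r\big(k_2e^{\sqrt3\theta}+k_3e^{-\sqrt3\theta}\big)\Big]p_\theta+\frac{3\sqrt3}{4}\big(k_2e^{\sqrt3\theta}-k_3e^{-\sqrt3\theta}\big)p_r$$ is a first integral of $\ddot x=-V_{,x}$, $\ddot y=-V_{,y}$, where $p_r=\dot r$ and $p_\theta=x\dot y-y\dot x=r^2\dot\theta$.
   Context: A first integral is a function of $(t,x,y,\dot x,\dot y)$ whose total time derivative vanishes along every solution of the given equations of motion. *)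

theory Defs
  imports "HOL-Analysis.Analysis"
begin

definition rad :: "real \<Rightarrow> real \<Rightarrow> real" where
  "rad x y = sqrt (x^2 + y^2)"

definition angle_branch :: "(real \<times> real) set \<Rightarrow> (real \<times> real \<Rightarrow> real) \<Rightarrow> bool" where
  "angle_branch U th \<longleftrightarrow> open U \<and> (0,0) \<notin> U \<and> continuous_on U th \<and>
     (\<forall>(a,b)\<in>U. a = rad a b * cos (th (a,b)) \<and> b = rad a b * sin (th (a,b)))"

definition Vpot :: "real \<Rightarrow> real \<Rightarrow> real \<Rightarrow> (real \<times> real \<Rightarrow> real) \<Rightarrow> real \<times> real \<Rightarrow> real" where
  "Vpot k1 k2 k3 th = (\<lambda>(x,y). k1 / (rad x y)^2
      + (k2 * exp (sqrt 3 * th (x,y)) + k3 * exp (- (sqrt 3 * th (x,y)))) / (rad x y)^3)"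

definition Jint :: "real \<Rightarrow> real \<Rightarrow> real \<Rightarrow> (real \<times> real \<Rightarrow> real)
     \<Rightarrow> real \<Rightarrow> real \<Rightarrow> real \<Rightarrow> real \<Rightarrow> real" where
  "Jint k1 k2 k3 th x y vx vy =
     (let r = rad x y; pth = x * vy - y * vx; pr = (x * vx + y * vy) / r;
          E2 = k2 * exp (sqrt 3 * th (x,y)); E3 = k3 * exp (- (sqrt 3 * th (x,y)))
      in pth ^ 3 + 3/4 * (2 * k1 + 3 / r * (E2 + E3)) * pth
         + 3 * sqrt 3 / 4 * (E2 - E3) * pr)"

end

theory Submission imports Defs begin

lemma theta_deriv:
  assumes ab: "angle_branch U th"
    and d1: "(z1 has_real_derivative d1) (at t0)"
    and d2: "(z2 has_real_derivative d2) (at t0)"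
    and inU: "(z1 t0, z2 t0) \<in> U"
  shows "((\<lambda>s. th (z1 s, z2 s)) has_real_derivative
           (z1 t0 * d2 - z2 t0 * d1) / ((z1 t0)^2 + (z2 t0)^2)) (at t0)"
proof -
  from ab have oU: "open U" and nz: "(0,0) \<notin> U" and cth: "continuous_on U th"
    and pol: "\<And>c d. (c,d) \<in> U \<Longrightarrow> c = rad c d * cos (th (c,d)) \<and> d = rad c d * sin (th (c,d))"
    unfolding angle_branch_def by auto
  define a where "a = z1 t0"
  define b where "b = z2 t0"
  define \<alpha> where "\<alpha> = th (a,b)"
  define r0 where "r0 = rad a b"
  have abU: "(a,b) \<in> U" using inU a_def b_def by simp
  have ab0: "a^2 + b^2 > 0"
  proof -
    have "(a,b) \<noteq> (0,0)" using abU nz by metis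
    hence "a \<noteq> 0 \<or> b \<noteq> 0" by auto
    thus ?thesis by (simp add: sum_power2_gt_zero_iff)
  qed
  have r0pos: "r0 > 0" unfolding r0_def rad_def using ab0 by simp
  have r0sq: "r0^2 = a^2 + b^2" unfolding r0_def rad_def using ab0 by simp
  have ca: "a = r0 * cos \<alpha>" and sb: "b = r0 * sin \<alpha>"
    using pol[OF abU] unfolding r0_def \<alpha>_def by auto
  have cz: "isCont (\<lambda>s. (z1 s, z2 s)) t0"
    using DERIV_isCont[OF d1] DERIV_isCont[OF d2] by (intro continuous_intros) auto
  have cthp: "isCont th (a,b)" using cth oU abU continuous_on_eq_continuous_at by blast
  have cT: "isCont (\<lambda>s. th (z1 s, z2 s)) t0"
    using continuous_at_compose[OF cz, of th] cthp unfolding a_def b_def o_def by simp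
  have T0: "((\<lambda>s. th (z1 s, z2 s)) \<longlongrightarrow> \<alpha>) (at t0)"
    using cT unfolding isCont_def \<alpha>_def a_def b_def by simp
  have evU: "eventually (\<lambda>s. (z1 s, z2 s) \<in> U) (at t0)"
    using topological_tendstoD[OF cz[unfolded isCont_def] oU] inU by simp
  have ev1: "eventually (\<lambda>s. th (z1 s, z2 s) > \<alpha> - pi/2) (at t0)"
    by (rule order_tendstoD(1)[OF T0]) simp
  have ev2: "eventually (\<lambda>s. th (z1 s, z2 s) < \<alpha> + pi/2) (at t0)"
    by (rule order_tendstoD(2)[OF T0]) simp
  define v where "v s = (z2 s * cos \<alpha> - z1 s * sin \<alpha>) / sqrt ((z1 s)^2 + (z2 s)^2)" for s
  have key: "th (z1 s, z2 s) = \<alpha> + arcsin (v s)"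
    if U: "(z1 s, z2 s) \<in> U" and l: "th (z1 s, z2 s) > \<alpha> - pi/2"
      and u: "th (z1 s, z2 s) < \<alpha> + pi/2" for s
  proof -
    define c where "c = z1 s"
    define d where "d = z2 s"
    define T where "T = th (c,d)"
    define R where "R = rad c d"
    have cd: "c = R * cos T" "d = R * sin T" using pol[of c d] U unfolding c_def d_def T_def R_def by auto
    have "(c,d) \<noteq> (0,0)" using U nz unfolding c_def d_def by metis
    hence Rne: "R \<noteq> 0" using cd by auto
    have "v s = (R * sin T * cos \<alpha> - R * cos T * sin \<alpha>) / R"
      unfolding v_def using cd unfolding c_def d_def R_def rad_def by simp
    also have "\<dots> = sin (T - \<alpha>)" using Rne by (simp add: sin_diff field_simps)
    finally have "arcsin (v s) = T - \<alpha>" using l u unfolding T_def c_def d_def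
      by (simp add: arcsin_sin)
    thus ?thesis unfolding T_def c_def d_def by simp
  qed
  have v0: "v t0 = 0"
  proof -
    have "z2 t0 * cos \<alpha> - z1 t0 * sin \<alpha> = 0" using ca sb unfolding a_def b_def by (simp add: algebra_simps)
    thus ?thesis unfolding v_def by simp
  qed
  have ev: "eventually (\<lambda>s. th (z1 s, z2 s) = \<alpha> + arcsin (v s)) (nhds t0)"
  proof -
    have "eventually (\<lambda>s. th (z1 s, z2 s) = \<alpha> + arcsin (v s)) (at t0)"
      using evU ev1 ev2 by eventually_elim (rule key)
    moreover have "th (z1 t0, z2 t0) = \<alpha> + arcsin (v t0)" using v0 \<alpha>_def a_def b_def by simp
    ultimately show ?thesis by (simp add: eventually_nhds_conv_at)
  qed
  have sq: "sqrt ((z1 t0)^2 + (z2 t0)^2) = r0" unfolding r0_def rad_def a_def b_def by simp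
  have N0: "z2 t0 * cos \<alpha> - z1 t0 * sin \<alpha> = 0" using ca sb unfolding a_def b_def by (simp add: algebra_simps)
  have Nd: "((\<lambda>s. z2 s * cos \<alpha> - z1 s * sin \<alpha>) has_real_derivative d2 * cos \<alpha> - d1 * sin \<alpha>) (at t0)"
    by (rule derivative_eq_intros refl d1 d2 | simp)+
  have Qd: "((\<lambda>s. (z1 s)^2 + (z2 s)^2) has_real_derivative 2 * z1 t0 * d1 + 2 * z2 t0 * d2) (at t0)"
    by (rule derivative_eq_intros refl d1 d2 | simp)+
  have ab0': "0 < (z1 t0)^2 + (z2 t0)^2" using ab0 a_def b_def by simp
  have Dd: "((\<lambda>s. sqrt ((z1 s)^2 + (z2 s)^2)) has_real_derivative
        inverse (sqrt ((z1 t0)^2 + (z2 t0)^2)) / 2 * (2 * z1 t0 * d1 + 2 * z2 t0 * d2)) (at t0)"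
    by (rule DERIV_chain2[OF DERIV_real_sqrt[OF ab0'] Qd])
  have vd: "(v has_real_derivative (d2 * cos \<alpha> - d1 * sin \<alpha>) / r0) (at t0)"
  proof -
    have h: "(v has_real_derivative ((d2 * cos \<alpha> - d1 * sin \<alpha>) * r0 - 0 * (inverse (sqrt ((z1 t0)^2 + (z2 t0)^2)) / 2 * (2 * z1 t0 * d1 + 2 * z2 t0 * d2))) / (r0 * r0)) (at t0)"
      unfolding v_def using DERIV_divide[OF Nd Dd] ab0' N0 sq r0pos by simp
    have e: "((d2 * cos \<alpha> - d1 * sin \<alpha>) * r0 - 0 * (inverse (sqrt ((z1 t0)^2 + (z2 t0)^2)) / 2 * (2 * z1 t0 * d1 + 2 * z2 t0 * d2))) / (r0 * r0) = (d2 * cos \<alpha> - d1 * sin \<alpha>) / r0"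
      using r0pos by simp
    show ?thesis using h unfolding e .
  qed
  have fin: "(d2 * cos \<alpha> - d1 * sin \<alpha>) / r0 = (z1 t0 * d2 - z2 t0 * d1) / ((z1 t0)^2 + (z2 t0)^2)"
  proof -
    have "(z1 t0 * d2 - z2 t0 * d1) / ((z1 t0)^2 + (z2 t0)^2) = (r0 * cos \<alpha> * d2 - r0 * sin \<alpha> * d1) / r0^2"
      using ca sb r0sq unfolding a_def b_def by simp
    also have "\<dots> = (d2 * cos \<alpha> - d1 * sin \<alpha>) / r0" using r0pos by (simp add: field_simps power2_eq_square)
    finally show ?thesis by simp
  qed
  have "((\<lambda>s. \<alpha> + arcsin (v s)) has_real_derivative
           (z1 t0 * d2 - z2 t0 * d1) / ((z1 t0)^2 + (z2 t0)^2)) (at t0)"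
    apply (rule derivative_eq_intros refl vd | simp add: v0)+
    using fin by simp
  thus ?thesis using DERIV_cong_ev[OF refl ev refl] by simp
qed
definition Vx where "Vx k1 k2 k3 th a b = (let q = a^2+b^2; r = sqrt q; \<theta> = th (a,b);
   E = k2 * exp (sqrt 3 * \<theta>) + k3 * exp (- (sqrt 3 * \<theta>));
   F = k2 * exp (sqrt 3 * \<theta>) - k3 * exp (- (sqrt 3 * \<theta>))
   in -2*k1*a/q^2 - 3*E*a/(q^2*r) - sqrt 3 * F * b / (q^2*r))"
definition Vy where "Vy k1 k2 k3 th a b = (let q = a^2+b^2; r = sqrt q; \<theta> = th (a,b);
   E = k2 * exp (sqrt 3 * \<theta>) + k3 * exp (- (sqrt 3 * \<theta>));
   F = k2 * exp (sqrt 3 * \<theta>) - k3 * exp (- (sqrt 3 * \<theta>))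
   in -2*k1*b/q^2 - 3*E*b/(q^2*r) + sqrt 3 * F * a / (q^2*r))"

lemma algV:
  fixes a b q r d1 d2 e1 e2 k1 k2 k3 s3 :: real
  assumes r: "r > 0" and q: "q = r^2"
  shows "((e1 * ((a * d2 - b * d1) * s3) * k2 / q - e2 * ((a * d2 - b * d1) * s3) * k3 / q) * (q * r)
     - (k2 * e1 + k3 * e2) * ((2 * a * d1 + 2 * b * d2) * r + inverse r * (2 * a * d1 + 2 * b * d2) * q / 2))
     / (q * r * (q * r)) - k1 * (2 * a * d1 + 2 * b * d2) / (q * q)
   = (-2*k1*a/q^2 - 3*(k2*e1+k3*e2)*a/(q^2*r) - s3 * (k2*e1-k3*e2) * b / (q^2*r)) * d1
     + (-2*k1*b/q^2 - 3*(k2*e1+k3*e2)*b/(q^2*r) + s3 * (k2*e1-k3*e2) * a / (q^2*r)) * d2"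
  using r unfolding q by (simp add: field_simps) algebra

lemma V_deriv:
  assumes ab: "angle_branch U th"
    and d1: "(z1 has_real_derivative d1) (at t0)"
    and d2: "(z2 has_real_derivative d2) (at t0)"
    and inU: "(z1 t0, z2 t0) \<in> U"
  shows "((\<lambda>s. Vpot k1 k2 k3 th (z1 s, z2 s)) has_real_derivative
           Vx k1 k2 k3 th (z1 t0) (z2 t0) * d1 + Vy k1 k2 k3 th (z1 t0) (z2 t0) * d2) (at t0)"
proof -
  have nz: "(0,0) \<notin> U" using ab unfolding angle_branch_def by auto
  define Q where "Q s = (z1 s)^2 + (z2 s)^2" for s
  define S where "S s = sqrt (Q s)" for s
  define T where "T s = th (z1 s, z2 s)" for s
  have Q0: "Q t0 > 0"
  proof -
    have "(z1 t0, z2 t0) \<noteq> (0,0)" using inU nz by metis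
    hence "z1 t0 \<noteq> 0 \<or> z2 t0 \<noteq> 0" by auto
    thus ?thesis unfolding Q_def by (simp add: sum_power2_gt_zero_iff)
  qed
  have S0: "S t0 > 0" unfolding S_def using Q0 by simp
  have Qne: "Q t0 \<noteq> 0" "S t0 \<noteq> 0" using Q0 S0 by auto
  have SS: "S t0 ^ 2 = Q t0" unfolding S_def using Q0 by simp
  have Qd: "(Q has_real_derivative 2 * z1 t0 * d1 + 2 * z2 t0 * d2) (at t0)"
    unfolding Q_def by (rule derivative_eq_intros refl d1 d2 | simp)+
  have Sd: "(S has_real_derivative inverse (S t0) / 2 * (2 * z1 t0 * d1 + 2 * z2 t0 * d2)) (at t0)"
    unfolding S_def by (rule DERIV_chain2[OF DERIV_real_sqrt[OF Q0] Qd])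
  have Td: "(T has_real_derivative (z1 t0 * d2 - z2 t0 * d1) / Q t0) (at t0)"
    unfolding T_def Q_def by (rule theta_deriv[OF ab d1 d2 inU])
  have eq: "Vpot k1 k2 k3 th (z1 s, z2 s) = k1 / Q s + (k2 * exp (sqrt 3 * T s) + k3 * exp (- (sqrt 3 * T s))) / (Q s * S s)" for s
  proof -
    have "(rad (z1 s) (z2 s))^2 = Q s" "(rad (z1 s) (z2 s))^3 = Q s * S s"
      unfolding rad_def Q_def S_def by (simp_all add: power3_eq_cube power2_eq_square[symmetric])
    thus ?thesis unfolding Vpot_def T_def by simp
  qed
  define e1 where "e1 = exp (sqrt 3 * T t0)"
  define e2 where "e2 = exp (- (sqrt 3 * T t0))"
  have vx: "Vx k1 k2 k3 th (z1 t0) (z2 t0) = -2*k1*(z1 t0)/(Q t0)^2 - 3*(k2*e1+k3*e2)*(z1 t0)/((Q t0)^2*S t0) - sqrt 3 * (k2*e1-k3*e2) * (z2 t0) / ((Q t0)^2*S t0)"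
    unfolding Vx_def Let_def Q_def S_def T_def e1_def e2_def ..
  have vy: "Vy k1 k2 k3 th (z1 t0) (z2 t0) = -2*k1*(z2 t0)/(Q t0)^2 - 3*(k2*e1+k3*e2)*(z2 t0)/((Q t0)^2*S t0) + sqrt 3 * (k2*e1-k3*e2) * (z1 t0) / ((Q t0)^2*S t0)"
    unfolding Vy_def Let_def Q_def S_def T_def e1_def e2_def ..
  show ?thesis
    unfolding eq
    apply (rule derivative_eq_intros refl Qd Sd Td | simp add: Qne)+
    unfolding e1_def[symmetric] e2_def[symmetric] vx vy by (rule algV[OF S0 SS[symmetric]])
qed
lemma accel:
  assumes ab: "angle_branch U th" and inU: "(a, b) \<in> U"
    and D: "(Vpot k1 k2 k3 th has_derivative (\<lambda>(h1, h2). - (p * h1 + q * h2))) (at (a, b))"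
  shows "p = - Vx k1 k2 k3 th a b" "q = - Vy k1 k2 k3 th a b"
proof -
  have p1: "((\<lambda>s. (a + s, b)) has_derivative (\<lambda>h. (h, 0))) (at 0)"
    by (rule derivative_eq_intros refl | simp)+
  have p2: "((\<lambda>s. (a, b + s)) has_derivative (\<lambda>h. (0, h))) (at 0)"
    by (rule derivative_eq_intros refl | simp)+
  have Da: "(Vpot k1 k2 k3 th has_derivative (\<lambda>(h1, h2). - (p * h1 + q * h2))) (at (a + 0, b))"
    "(Vpot k1 k2 k3 th has_derivative (\<lambda>(h1, h2). - (p * h1 + q * h2))) (at (a, b + 0))" using D by simp_all
  have D1: "((\<lambda>s. Vpot k1 k2 k3 th (a + s, b)) has_real_derivative - p) (at 0)"
    unfolding has_field_derivative_def
    by (rule has_derivative_eq_rhs[OF has_derivative_compose[OF p1 Da(1)]]) (auto simp: o_def)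
  have D2: "((\<lambda>s. Vpot k1 k2 k3 th (a, b + s)) has_real_derivative - q) (at 0)"
    unfolding has_field_derivative_def
    by (rule has_derivative_eq_rhs[OF has_derivative_compose[OF p2 Da(2)]]) (auto simp: o_def)
  have l1: "((\<lambda>s. a + s) has_real_derivative 1) (at 0)" by (rule derivative_eq_intros refl | simp)+
  have l2: "((\<lambda>s. b + s) has_real_derivative 1) (at 0)" by (rule derivative_eq_intros refl | simp)+
  have c1: "((\<lambda>s. a) has_real_derivative 0) (at 0)" by simp
  have c2: "((\<lambda>s. b) has_real_derivative 0) (at 0)" by simp
  have E1: "((\<lambda>s. Vpot k1 k2 k3 th (a + s, b)) has_real_derivative Vx k1 k2 k3 th a b * 1 + Vy k1 k2 k3 th a b * 0) (at 0)"
    using V_deriv[OF ab l1 c2] inU by simp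
  have E2: "((\<lambda>s. Vpot k1 k2 k3 th (a, b + s)) has_real_derivative Vx k1 k2 k3 th a b * 0 + Vy k1 k2 k3 th a b * 1) (at 0)"
    using V_deriv[OF ab c1 l2] inU by simp
  show "p = - Vx k1 k2 k3 th a b" using DERIV_unique[OF D1 E1] by simp
  show "q = - Vy k1 k2 k3 th a b" using DERIV_unique[OF D2 E2] by simp
qed

theorem mainTheorem6:
  fixes k1 k2 k3 :: real
    and U :: "(real \<times> real) set" and th :: "real \<times> real \<Rightarrow> real"
    and I :: "real set" and x y x' y' x'' y'' :: "real \<Rightarrow> real"
  assumes "angle_branch U th"
    and "open I"
    and "\<forall>t\<in>I. (x t, y t) \<in> U"
    and "\<forall>t\<in>I. (x has_real_derivative x' t) (at t) \<and> (y has_real_derivative y' t) (at t)"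
    and "\<forall>t\<in>I. (x' has_real_derivative x'' t) (at t) \<and> (y' has_real_derivative y'' t) (at t)"
    and "\<forall>t\<in>I. (Vpot k1 k2 k3 th has_derivative
                 (\<lambda>(h1, h2). - (x'' t * h1 + y'' t * h2))) (at (x t, y t))"
  shows "\<forall>t\<in>I. ((\<lambda>s. Jint k1 k2 k3 th (x s) (y s) (x' s) (y' s)) has_real_derivative 0) (at t)"
proof
  fix t assume tI: "t \<in> I"
  note ab = assms(1)
  have inU: "(x t, y t) \<in> U" using assms(3) tI by blast
  have dx: "(x has_real_derivative x' t) (at t)" and dy: "(y has_real_derivative y' t) (at t)"
    using assms(4) tI by auto
  have dx': "(x' has_real_derivative x'' t) (at t)" and dy': "(y' has_real_derivative y'' t) (at t)"
    using assms(5) tI by auto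
  have acc: "x'' t = - Vx k1 k2 k3 th (x t) (y t)" "y'' t = - Vy k1 k2 k3 th (x t) (y t)"
    using accel[OF ab inU] assms(6) tI by auto
  have nz: "(0,0) \<notin> U" using ab unfolding angle_branch_def by auto
  define Q where "Q s = (x s)^2 + (y s)^2" for s
  define S where "S s = sqrt (Q s)" for s
  define T where "T s = th (x s, y s)" for s
  have Q0: "Q t > 0"
  proof -
    have "(x t, y t) \<noteq> (0,0)" using inU nz by metis
    hence "x t \<noteq> 0 \<or> y t \<noteq> 0" by auto
    thus ?thesis unfolding Q_def by (simp add: sum_power2_gt_zero_iff)
  qed
  have S0: "S t > 0" unfolding S_def using Q0 by simp
  have Qne: "Q t \<noteq> 0" "S t \<noteq> 0" using Q0 S0 by auto
  have SS: "S t ^ 2 = Q t" unfolding S_def using Q0 by simp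
  have Qd: "(Q has_real_derivative 2 * x t * x' t + 2 * y t * y' t) (at t)"
    unfolding Q_def by (rule derivative_eq_intros refl dx dy | simp)+
  have Sd: "(S has_real_derivative inverse (S t) / 2 * (2 * x t * x' t + 2 * y t * y' t)) (at t)"
    unfolding S_def by (rule DERIV_chain2[OF DERIV_real_sqrt[OF Q0] Qd])
  have Td: "(T has_real_derivative (x t * y' t - y t * x' t) / Q t) (at t)"
    unfolding T_def Q_def by (rule theta_deriv[OF ab dx dy inU])
  have eq: "Jint k1 k2 k3 th (x s) (y s) (x' s) (y' s) =
     (x s * y' s - y s * x' s) ^ 3 + 3/4 * (2 * k1 + 3 / S s * (k2 * exp (sqrt 3 * T s) + k3 * exp (- (sqrt 3 * T s)))) * (x s * y' s - y s * x' s)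
         + 3 * sqrt 3 / 4 * (k2 * exp (sqrt 3 * T s) - k3 * exp (- (sqrt 3 * T s))) * ((x s * x' s + y s * y' s) / S s)" for s
    unfolding Jint_def Let_def S_def Q_def T_def rad_def by simp
  have SSq: "S t ^ 2 = x t ^ 2 + y t ^ 2" using SS Q_def by simp
  have s3: "sqrt 3 ^ 2 = (3::real)" by simp
  define e1 where "e1 = exp (sqrt 3 * T t)"
  define e2 where "e2 = exp (- (sqrt 3 * T t))"
  have vx: "Vx k1 k2 k3 th (x t) (y t) = -2*k1*(x t)/(Q t)^2 - 3*(k2*e1+k3*e2)*(x t)/((Q t)^2*S t) - sqrt 3 * (k2*e1-k3*e2) * (y t) / ((Q t)^2*S t)"
    unfolding Vx_def Let_def Q_def S_def T_def e1_def e2_def ..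
  have vy: "Vy k1 k2 k3 th (x t) (y t) = -2*k1*(y t)/(Q t)^2 - 3*(k2*e1+k3*e2)*(y t)/((Q t)^2*S t) + sqrt 3 * (k2*e1-k3*e2) * (x t) / ((Q t)^2*S t)"
    unfolding Vy_def Let_def Q_def S_def T_def e1_def e2_def ..
  show "((\<lambda>s. Jint k1 k2 k3 th (x s) (y s) (x' s) (y' s)) has_real_derivative 0) (at t)"
    unfolding eq
    apply (rule derivative_eq_intros refl dx dy dx' dy' Sd Td | simp add: Qne)+
    unfolding e1_def[symmetric] e2_def[symmetric] acc vx vy
    apply (simp only: SS[symmetric])
    using S0 apply (simp add: field_simps)
    using SSq s3 by algebra
qed
end
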